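(* Let $\mathcal G=(\mathcal V,\mathcal E)$ be a hypergraph with $\mathcal V=[n]$, all of whose edges are nonempty, with special vertices $\mathcal V^{\mathrm{sp}}$, and let $\mathbf m\in\mathbb Z_{\ge0}^n$. Then, as polynomials in $q$ (equivalently, for every positive integer $q$), \[ {}_{\mathbf m}\Pi^{\mathrm{mark}}_{\mathcal G}(q)=\sum_{\underline{\boldsymbol\lambda}\in S(\mathbf m)}\frac{\Pi_{\mathcal G(\underline{\boldsymbol\lambda},\mathbf m)}(q)}{\prod_{i\in\mathrm{supp}(\mathbf m)}\prod_{k\ge1}\bigl(d_k^{\boldsymbol\lambda_i}\bigr)!}. \]
   Context: Hypergraph, special vertices $\mathcal V^{\mathrm{sp}}\subseteq\mathcal V=[n]$, and ${}_{\mathbf m}\Pi^{\mathrm{mark}}_{\mathcal G}(q)$: for $q\in\mathbb N$, the number of maps $\Gamma$ assigning to each vertex $v$ a finite multiset $\Gamma(v)$ of elements of $\{1,\dots,q\}$ with $\Gamma(v)$ a set for $v\notin\mathcal V^{\mathrm{sp}}$, $|\Gamma(v)|=m_v$ (with multiplicity), and, for each edge $e$, the underlying sets of $\Gamma(v)$, $v\in e$, having empty common intersection. For a hypergraph $\mathcal H$, $\Pi_{\mathcal H}(q)$ is its ordinary chromatic polynomial: the number of maps $c$ from the vertex set to $\{1,\dots,q\}$ such that no edge is monochromatic (i.e. for each edge $e$, $c$ is not constant on $e$). A partition $\lambda$ of $m$ is a weakly decreasing tuple of positive integers summing to $m$; $\ell(\lambda)$ is its number of parts and $d_k^\lambda$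 the number of parts equal to $k$; the empty partition of $0$ has length $0$. $S(\mathbf m)$ is the set of tuples $\underline{\boldsymbol\lambda}=(\boldsymbol\lambda_i)_{i\in[n]}$ with $\boldsymbol\lambda_i$ a partition of $m_i$ and $\boldsymbol\lambda_i=(1^{m_i})$ for $i\notin\mathcal V^{\mathrm{sp}}$. For $\underline{\boldsymbol\lambda}\in S(\mathbf m)$, $\mathcal G(\underline{\boldsymbol\lambda},\mathbf m)$ is the hypergraph with vertex set $\{(i,r): i\in\mathrm{supp}(\mathbf m),\ 1\le r\le\ell(\boldsymbol\lambda_i)\}$ and edges: (a) $\{(i,r),(i,s)\}$ for each $i\in\mathrm{supp}(\mathbf m)$ and $1\le r<s\le\ell(\boldsymbol\lambda_i)$ (each vertex $i$ is replaced by a clique of size $\ell(\boldsymbol\lambda_i)$); (b) for each edge $\{i_1,\dots,i_k\}\in\mathcal E$ contained in $\mathrm{supp}(\mathbf m)$ and each choice $1\le r_j\le\ell(\boldsymbol\lambda_{i_j})$, the edge $\{(i_1,r_1),\dots,(i_k,r_k)\}$. *)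

theory Defs
  imports "HOL-Analysis.Analysis" "HOL-Library.Multiset"
begin

definition is_partition :: "nat list \<Rightarrow> nat \<Rightarrow> bool" where
  "is_partition lam k \<longleftrightarrow> sorted (rev lam) \<and> (\<forall>x\<in>set lam. 0 < x) \<and> sum_list lam = k"

definition supp_m :: "nat \<Rightarrow> (nat \<Rightarrow> nat) \<Rightarrow> nat set" where
  "supp_m n m = {i \<in> {1..n}. m i \<noteq> 0}"

definition marked_count :: "nat \<Rightarrow> nat set set \<Rightarrow> nat set \<Rightarrow> (nat \<Rightarrow> nat) \<Rightarrow> nat \<Rightarrow> nat" where
  "marked_count n E Vsp m q = card {\<Gamma> :: nat \<Rightarrow> nat multiset.
      (\<forall>v. v \<notin> {1..n} \<longrightarrow> \<Gamma> v = {#}) \<and>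
      (\<forall>v\<in>{1..n}. set_mset (\<Gamma> v) \<subseteq> {1..q} \<and> size (\<Gamma> v) = m v \<and>
                   (v \<notin> Vsp \<longrightarrow> (\<forall>x. count (\<Gamma> v) x \<le> 1))) \<and>
      (\<forall>e\<in>E. (\<Inter>v\<in>e. set_mset (\<Gamma> v)) = {})}"

definition hyp_chrom :: "'a set \<Rightarrow> 'a set set \<Rightarrow> nat \<Rightarrow> nat" where
  "hyp_chrom V Es q = card {c \<in> PiE V (\<lambda>_. {1..q}). \<forall>e\<in>Es. \<not> (\<exists>a. \<forall>x\<in>e. c x = a)}"

definition S_m :: "nat \<Rightarrow> nat set \<Rightarrow> (nat \<Rightarrow> nat) \<Rightarrow> (nat \<Rightarrow> nat list) set" where
  "S_m n Vsp m = {\<Lambda>. (\<forall>i. i \<notin> {1..n} \<longrightarrow> \<Lambda> i = []) \<and>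
      (\<forall>i\<in>{1..n}. is_partition (\<Lambda> i) (m i) \<and> (i \<notin> Vsp \<longrightarrow> \<Lambda> i = replicate (m i) 1))}"

definition G_verts :: "nat \<Rightarrow> (nat \<Rightarrow> nat) \<Rightarrow> (nat \<Rightarrow> nat list) \<Rightarrow> (nat \<times> nat) set" where
  "G_verts n m \<Lambda> = {(i, r). i \<in> supp_m n m \<and> 1 \<le> r \<and> r \<le> length (\<Lambda> i)}"

definition G_edges :: "nat \<Rightarrow> nat set set \<Rightarrow> (nat \<Rightarrow> nat) \<Rightarrow> (nat \<Rightarrow> nat list) \<Rightarrow> (nat \<times> nat) set set" where
  "G_edges n E m \<Lambda> =
     {{(i, r), (i, s)} | i r s. i \<in> supp_m n m \<and> 1 \<le> r \<and> r < s \<and> s \<le> length (\<Lambda> i)}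
   \<union> {(\<lambda>i. (i, \<rho> i)) ` e | e \<rho>. e \<in> E \<and> e \<subseteq> supp_m n m \<and>
        (\<forall>i\<in>e. 1 \<le> \<rho> i \<and> \<rho> i \<le> length (\<Lambda> i))}"

definition mult_fact :: "nat list \<Rightarrow> nat" where
  "mult_fact lam = (\<Prod>k\<in>set lam. fact (count_list lam k))"

end

theory Submission
  imports Defs
begin


definition msum :: "nat list \<Rightarrow> (nat \<Rightarrow> nat) \<Rightarrow> nat multiset" where
  "msum lam f = (\<Sum>r\<in>{1..length lam}. replicate_mset (lam ! (r - 1)) (f r))"

definition shape :: "nat multiset \<Rightarrow> nat multiset" where
  "shape M = image_mset (count M) (mset_set (set_mset M))"

lemma msum_snoc: "msum (xs @ [k]) f = msum xs f + replicate_mset k (f (Suc (length xs)))"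
proof -
  have "msum (xs @ [k]) f = (\<Sum>r\<in>insert (Suc (length xs)) {1..length xs}. replicate_mset ((xs@[k]) ! (r - 1)) (f r))"
    unfolding msum_def by (simp add: atLeastAtMostSuc_conv)
  also have "\<dots> = replicate_mset k (f (Suc (length xs))) + (\<Sum>r\<in>{1..length xs}. replicate_mset ((xs@[k]) ! (r - 1)) (f r))"
    by (subst sum.insert) auto
  also have "(\<Sum>r\<in>{1..length xs}. replicate_mset ((xs@[k]) ! (r - 1)) (f r)) = msum xs f"
    unfolding msum_def by (rule sum.cong) (auto simp: nth_append)
  finally show ?thesis by (simp add: add.commute)
qed

lemma msum_cong: "(\<And>r. r \<in> {1..length lam} \<Longrightarrow> f r = g r) \<Longrightarrow> msum lam f = msum lam g"
  unfolding msum_def by (rule sum.cong) auto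

lemma count_msum: "count (msum lam f) x = (\<Sum>r\<in>{1..length lam}. if f r = x then lam ! (r - 1) else 0)"
  unfolding msum_def count_sum by (intro sum.cong) auto

lemma msum_Nil[simp]: "msum [] f = {#}"
  by (simp add: msum_def)

lemma size_msum: "size (msum lam f) = sum_list lam"
  by (induction lam rule: rev_induct) (auto simp: msum_snoc)

lemma count_msum_inj:
  assumes "inj_on f {1..length lam}" "r \<in> {1..length lam}"
  shows "count (msum lam f) (f r) = lam ! (r - 1)"
proof -
  have "count (msum lam f) (f r) = (\<Sum>r'\<in>{1..length lam}. if r' = r then lam ! (r - 1) else 0)"
    unfolding count_msum using assms by (intro sum.cong) (auto dest: inj_onD)
  then show ?thesis using assms by simp
qed

lemma count_msum_out:
  assumes "x \<notin> f ` {1..length lam}"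
  shows "count (msum lam f) x = 0"
  unfolding count_msum using assms by (intro sum.neutral) auto

lemma set_msum:
  assumes "\<forall>x\<in>set lam. 0 < x"
  shows "set_mset (msum lam f) = f ` {1..length lam}"
proof -
  have "lam ! (r - 1) > 0" if "r \<in> {1..length lam}" for r
    using assms that by (auto simp: in_set_conv_nth)
  then show ?thesis unfolding msum_def by (auto simp: set_mset_sum)
qed

lemma mset_as_image: "mset lam = image_mset (\<lambda>r. lam ! (r - 1)) (mset_set {1..length lam})"
proof -
  have "{1..length lam} = Suc ` {0..<length lam}" by (auto simp: image_iff intro!: bexI[of _ "x - 1" for x])
  then have "mset_set {1..length lam} = image_mset Suc (mset_set {0..<length lam})"
    by (simp add: image_mset_mset_set)
  moreover have "mset lam = mset (map (nth lam) [0..<length lam])" by (simp add: map_nth)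
  ultimately show ?thesis by (simp add: multiset.map_comp o_def del: mset_map) (simp only: mset_map mset_upt)
qed

lemma shape_msum:
  assumes "\<forall>x\<in>set lam. 0 < x" "inj_on f {1..length lam}"
  shows "shape (msum lam f) = mset lam"
proof -
  have "shape (msum lam f) = image_mset (count (msum lam f)) (mset_set (f ` {1..length lam}))"
    unfolding shape_def using set_msum[OF assms(1)] by simp
  also have "\<dots> = image_mset (count (msum lam f) \<circ> f) (mset_set {1..length lam})"
    using assms(2) by (simp add: image_mset_mset_set[symmetric] multiset.map_comp)
  also have "\<dots> = image_mset (\<lambda>r. lam ! (r - 1)) (mset_set {1..length lam})"
    by (intro image_mset_cong) (simp add: count_msum_inj[OF assms(2)])
  finally show ?thesis by (metis mset_as_image)
qed


lemma mult_fact_snoc: "mult_fact (xs @ [k]) = (count_list xs k + 1) * mult_fact xs"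
proof (cases "k \<in> set xs")
  case True
  then have s: "set (xs @ [k]) = set xs" by auto
  have "mult_fact (xs @ [k]) = (\<Prod>j\<in>set xs. fact (count_list (xs @ [k]) j))"
    unfolding mult_fact_def s ..
  also have "\<dots> = fact (count_list (xs @ [k]) k) * (\<Prod>j\<in>set xs - {k}. fact (count_list (xs @ [k]) j))"
    using True by (simp add: prod.remove)
  also have "(\<Prod>j\<in>set xs - {k}. fact (count_list (xs @ [k]) j)) = (\<Prod>j\<in>set xs - {k}. fact (count_list xs j))"
    by (intro prod.cong) auto
  also have "mult_fact xs = fact (count_list xs k) * (\<Prod>j\<in>set xs - {k}. fact (count_list xs j))"
    unfolding mult_fact_def using True by (simp add: prod.remove)
  ultimately show ?thesis by (simp add: algebra_simps)
next
  case False
  then have c: "count_list xs k = 0" by (simp add: count_list_0_iff)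
  have "mult_fact (xs @ [k]) = fact (count_list (xs @ [k]) k) * (\<Prod>j\<in>set xs. fact (count_list (xs @ [k]) j))"
    unfolding mult_fact_def using False by simp
  also have "(\<Prod>j\<in>set xs. fact (count_list (xs @ [k]) j)) = mult_fact xs"
    unfolding mult_fact_def using False by (intro prod.cong) auto
  finally show ?thesis using c by simp
qed

definition Tset :: "nat list \<Rightarrow> nat multiset \<Rightarrow> nat set \<Rightarrow> (nat \<Rightarrow> nat) set" where
  "Tset lam M Q = {f \<in> PiE {1..length lam} (\<lambda>_. Q). inj_on f {1..length lam} \<and> msum lam f = M}"

lemma finite_Tset: "finite Q \<Longrightarrow> finite (Tset lam M Q)"
  unfolding Tset_def by (rule finite_subset[of _ "PiE {1..length lam} (\<lambda>_. Q)"]) (auto intro: finite_PiE)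

lemma count_image_mset_set: "finite A \<Longrightarrow> count (image_mset g (mset_set A)) k = card {x\<in>A. g x = k}"
proof -
  assume fA: "finite A"
  have "count (image_mset g (mset_set A)) k = (\<Sum>y\<in>g -` {k} \<inter> A. count (mset_set A) y)"
    using fA by (simp add: count_image_mset)
  also have "\<dots> = (\<Sum>y\<in>g -` {k} \<inter> A. 1)" using fA by (intro sum.cong) auto
  also have "g -` {k} \<inter> A = {x\<in>A. g x = k}" by auto
  finally show ?thesis by simp
qed

lemma card_Tset:
  assumes "finite Q" "\<forall>x\<in>set lam. 0 < x" "set_mset M \<subseteq> Q" "shape M = mset lam"
  shows "card (Tset lam M Q) = mult_fact lam"
  using assms(2-4)
proof (induction lam arbitrary: M rule: rev_induct)
  case Nil
  then have "mset_set (set_mset M) = {#}" unfolding shape_def by simp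
  then have "set_mset M = {}" by (simp add: mset_set_empty_iff)
  then have "M = {#}" by simp
  then have "Tset [] M Q = {\<lambda>_. undefined}" unfolding Tset_def by auto
  then show ?case by (simp add: mult_fact_def)
next
  case (snoc k xs)
  define l where "l = length xs"
  have kpos: "k > 0" using snoc.prems by auto
  define X where "X = {x \<in> set_mset M. count M x = k}"
  have finX: "finite X" unfolding X_def by auto
  have eq: "Tset (xs @ [k]) M Q = (\<Union>x\<in>X. (\<lambda>g. g(Suc l := x)) ` Tset xs (M - replicate_mset k x) Q)"
  proof (intro equalityI subsetI)
    fix f assume f: "f \<in> Tset (xs @ [k]) M Q"
    define x where "x = f (Suc l)"
    define g where "g = f(Suc l := undefined)"
    have fg: "f = g(Suc l := x)" unfolding g_def x_def by simp
    have ms: "msum (xs @ [k]) f = M" and inj: "inj_on f {1..Suc l}" and fP: "f \<in> PiE {1..Suc l} (\<lambda>_. Q)"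
      using f unfolding Tset_def l_def by auto
    have gP: "g \<in> PiE {1..l} (\<lambda>_. Q)" using fP unfolding g_def by (auto simp: PiE_def extensional_def Pi_def)
    have ginj: "inj_on g {1..l}" using inj unfolding g_def by (auto simp: inj_on_def)
    have mg: "msum xs g = msum xs f" unfolding l_def g_def by (rule msum_cong) auto
    have M: "M = msum xs g + replicate_mset k x"
      unfolding mg x_def l_def using ms msum_snoc[of xs k f] by metis
    have xn: "x \<notin> g ` {1..l}"
    proof
      assume "x \<in> g ` {1..l}"
      then obtain r where r: "r \<in> {1..l}" "g r = x" by auto
      then have "f r = f (Suc l)" "r \<noteq> Suc l" unfolding g_def x_def by auto
      then show False using inj r(1) by (auto simp: inj_on_def)
    qed
    have "count (msum xs g) x = 0" using count_msum_out[of x g xs] xn l_def by simp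
    then have cx: "count M x = k" using M by simp
    have "x \<in># M" using cx kpos by (rule_tac ccontr) (simp add: not_in_iff)
    then have xX: "x \<in> X" unfolding X_def using cx by simp
    have gT: "g \<in> Tset xs (M - replicate_mset k x) Q"
      unfolding Tset_def using gP ginj M l_def by simp
    show "f \<in> (\<Union>x\<in>X. (\<lambda>g. g(Suc l := x)) ` Tset xs (M - replicate_mset k x) Q)"
      unfolding fg by (rule UN_I[OF xX], rule imageI[OF gT])
  next
    fix f assume "f \<in> (\<Union>x\<in>X. (\<lambda>g. g(Suc l := x)) ` Tset xs (M - replicate_mset k x) Q)"
    then obtain x where x: "x \<in> X" and fx: "f \<in> (\<lambda>g. g(Suc l := x)) ` Tset xs (M - replicate_mset k x) Q"
      by (rule UN_E)
    from fx obtain g where fg: "f = g(Suc l := x)" and g: "g \<in> Tset xs (M - replicate_mset k x) Q"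
      by (rule imageE)
    have gP: "g \<in> PiE {1..l} (\<lambda>_. Q)" and ginj: "inj_on g {1..l}" and mg: "msum xs g = M - replicate_mset k x"
      using g unfolding Tset_def l_def by blast+
    have cx: "count M x = k" "x \<in># M" using x unfolding X_def by auto
    have xn: "x \<notin> g ` {1..l}"
    proof
      assume "x \<in> g ` {1..l}"
      then obtain r where r: "r \<in> {1..l}" "g r = x" by auto
      have "count (msum xs g) x = xs ! (r - 1)" using count_msum_inj[of g xs r] ginj r l_def by simp
      moreover have "xs ! (r - 1) > 0" using snoc.prems(1) r l_def by (auto simp: nth_append)
      moreover have "count (M - replicate_mset k x) x = 0" using cx by simp
      ultimately show False using mg by simp
    qed
    have fP: "f \<in> PiE {1..Suc l} (\<lambda>_. Q)" using gP fg cx snoc.prems(2)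
      by (auto simp: PiE_def extensional_def Pi_def)
    have s1: "{1..Suc l} = insert (Suc l) {1..l}" by (simp add: atLeastAtMostSuc_conv)
    have i1: "inj_on f {1..l}" using ginj unfolding fg by (rule inj_on_cong[THEN iffD1, rotated]) auto
    have im: "f ` ({1..l} - {Suc l}) = g ` {1..l}" unfolding fg by auto
    have finj: "inj_on f {1..Suc l}" unfolding s1 inj_on_insert using i1 im xn fg by simp
    have mfg: "msum xs f = msum xs g" unfolding fg l_def by (rule msum_cong) auto
    have sub: "replicate_mset k x \<subseteq># M" using cx by (simp add: subseteq_mset_def)
    have "msum (xs @ [k]) f = msum xs g + replicate_mset k x"
      using msum_snoc[of xs k f] mfg fg l_def by simp
    also have "\<dots> = M" using mg sub by (simp add: subset_mset.diff_add)
    finally have msf: "msum (xs @ [k]) f = M" .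
    have len: "length (xs @ [k]) = Suc l" using l_def by simp
    show "f \<in> Tset (xs @ [k]) M Q"
      unfolding Tset_def mem_Collect_eq len using fP finj msf by blast
  qed
  have card_piece: "card ((\<lambda>g. g(Suc l := x)) ` Tset xs (M - replicate_mset k x) Q) = mult_fact xs"
    if x: "x \<in> X" for x
  proof -
    have cx: "count M x = k" "x \<in># M" using x unfolding X_def by auto
    have inj: "inj_on (\<lambda>g. g(Suc l := x)) (Tset xs (M - replicate_mset k x) Q)"
    proof (rule inj_onI)
      fix g h assume g: "g \<in> Tset xs (M - replicate_mset k x) Q" and h: "h \<in> Tset xs (M - replicate_mset k x) Q"
        and e: "g(Suc l := x) = h(Suc l := x)"
      have "g (Suc l) = undefined" "h (Suc l) = undefined" using g h unfolding Tset_def l_def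
        by (auto simp: PiE_def extensional_def)
      show "g = h"
      proof (rule ext)
        fix r show "g r = h r"
          using fun_cong[OF e, of r] \<open>g (Suc l) = undefined\<close> \<open>h (Suc l) = undefined\<close>
          by (cases "r = Suc l") auto
      qed
    qed
    have sM: "set_mset (M - replicate_mset k x) = set_mset M - {x}"
    proof (rule set_eqI)
      fix y show "y \<in># M - replicate_mset k x \<longleftrightarrow> y \<in> set_mset M - {x}"
        using cx by (cases "y = x") (simp_all add: in_diff_count)
    qed
    have "shape (M - replicate_mset k x) = image_mset (count M) (mset_set (set_mset M - {x}))"
      unfolding shape_def sM by (intro image_mset_cong) auto
    also have "\<dots> = image_mset (count M) (mset_set (set_mset M) - {#x#})"
      using cx by (simp add: mset_set_Diff)
    also have "\<dots> = shape M - {#k#}"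
      unfolding shape_def using cx by (simp add: image_mset_Diff)
    also have "\<dots> = mset xs" using snoc.prems(3) by simp
    finally have sh: "shape (M - replicate_mset k x) = mset xs" .
    have "card (Tset xs (M - replicate_mset k x) Q) = mult_fact xs"
    proof (rule snoc.IH[OF _ _ sh])
      show "\<forall>x\<in>set xs. 0 < x" using snoc.prems(1) by simp
      show "set_mset (M - replicate_mset k x) \<subseteq> Q" using sM snoc.prems(2) by blast
    qed
    then show ?thesis using card_image[OF inj] by simp
  qed
  have "card (Tset (xs @ [k]) M Q) = (\<Sum>x\<in>X. card ((\<lambda>g. g(Suc l := x)) ` Tset xs (M - replicate_mset k x) Q))"
    unfolding eq
  proof (rule card_UN_disjoint[OF finX])
    show "\<forall>x\<in>X. finite ((\<lambda>g. g(Suc l := x)) ` Tset xs (M - replicate_mset k x) Q)"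
      using finite_Tset[OF assms(1)] by auto
    show "\<forall>x\<in>X. \<forall>y\<in>X. x \<noteq> y \<longrightarrow> (\<lambda>g. g(Suc l := x)) ` Tset xs (M - replicate_mset k x) Q \<inter>
        (\<lambda>g. g(Suc l := y)) ` Tset xs (M - replicate_mset k y) Q = {}"
    proof (intro ballI impI)
      fix x y :: nat assume "x \<noteq> y"
      have s1: "(\<lambda>g. g(Suc l := x)) ` Tset xs (M - replicate_mset k x) Q \<subseteq> {h. h (Suc l) = x}" by auto
      have s2: "(\<lambda>g. g(Suc l := y)) ` Tset xs (M - replicate_mset k y) Q \<subseteq> {h. h (Suc l) = y}" by auto
      show "(\<lambda>g. g(Suc l := x)) ` Tset xs (M - replicate_mset k x) Q \<inter>
        (\<lambda>g. g(Suc l := y)) ` Tset xs (M - replicate_mset k y) Q = {}"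
      proof (rule ccontr)
        assume "\<not> ?thesis"
        then obtain h where "h \<in> (\<lambda>g. g(Suc l := x)) ` Tset xs (M - replicate_mset k x) Q"
          "h \<in> (\<lambda>g. g(Suc l := y)) ` Tset xs (M - replicate_mset k y) Q" by blast
        then have "h (Suc l) = x" "h (Suc l) = y" using s1 s2 by blast+
        then show False using \<open>x \<noteq> y\<close> by simp
      qed
    qed
  qed
  also have "\<dots> = (\<Sum>x\<in>X. mult_fact xs)" by (rule sum.cong) (simp_all add: card_piece)
  also have "\<dots> = card X * mult_fact xs" by simp
  also have "card X = count (shape M) k"
    unfolding X_def shape_def by (simp add: count_image_mset_set)
  also have "\<dots> = count_list xs k + 1" using snoc.prems(3) by (simp add: count_mset)
  finally show ?case by (simp add: mult_fact_snoc)
qed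




lemma card_Sigma_PiE:
  fixes I :: "'a set" and J :: "'a \<Rightarrow> 'b set" and B :: "'c set" and P :: "'a \<Rightarrow> ('b \<Rightarrow> 'c) \<Rightarrow> bool"
  assumes fin: "finite I"
    and cong: "\<And>i f g. i \<in> I \<Longrightarrow> (\<And>r. r \<in> J i \<Longrightarrow> f r = g r) \<Longrightarrow> P i f = P i g"
  shows "card {c \<in> PiE (Sigma I J) (\<lambda>_. B). \<forall>i\<in>I. P i (\<lambda>r. c (i, r))} =
         (\<Prod>i\<in>I. card {f \<in> PiE (J i) (\<lambda>_. B). P i f})"
proof -
  define L where "L = {c \<in> PiE (Sigma I J) (\<lambda>_. B). \<forall>i\<in>I. P i (\<lambda>r. c (i, r))}"
  define R where "R = PiE I (\<lambda>i. {f \<in> PiE (J i) (\<lambda>_. B). P i f})"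
  define F where "F = (\<lambda>c :: 'a \<times> 'b \<Rightarrow> 'c. \<lambda>i\<in>I. \<lambda>r\<in>J i. c (i, r))"
  define G where "G = (\<lambda>Fm :: 'a \<Rightarrow> 'b \<Rightarrow> 'c. \<lambda>p\<in>Sigma I J. Fm (fst p) (snd p))"
  have "bij_betw F L R"
  proof (rule bij_betwI[where g = G])
    show "F \<in> L \<rightarrow> R"
    proof
      fix c assume c: "c \<in> L"
      have "(\<lambda>r\<in>J i. c (i, r)) \<in> {f \<in> PiE (J i) (\<lambda>_. B). P i f}" if i: "i \<in> I" for i
      proof -
        have "(\<lambda>r\<in>J i. c (i, r)) \<in> PiE (J i) (\<lambda>_. B)" using c i unfolding L_def by (auto simp: PiE_def Pi_def)
        moreover have "P i (\<lambda>r\<in>J i. c (i, r)) = P i (\<lambda>r. c (i, r))" using i by (intro cong) auto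
        ultimately show ?thesis using c i unfolding L_def by simp
      qed
      then show "F c \<in> R" unfolding F_def R_def by (auto simp: PiE_def)
    qed
    show "G \<in> R \<rightarrow> L"
    proof
      fix Fm assume Fm: "Fm \<in> R"
      have "G Fm \<in> PiE (Sigma I J) (\<lambda>_. B)" using Fm unfolding G_def R_def by (auto simp: PiE_def Pi_def)
      moreover have "P i (\<lambda>r. G Fm (i, r))" if i: "i \<in> I" for i
      proof -
        have "P i (\<lambda>r. G Fm (i, r)) = P i (Fm i)" using i unfolding G_def by (intro cong) auto
        moreover have "P i (Fm i)" using Fm i unfolding R_def by auto
        ultimately show ?thesis by simp
      qed
      ultimately show "G Fm \<in> L" unfolding L_def by simp
    qed
    show "G (F c) = c" if c: "c \<in> L" for c
    proof (rule ext)
      fix p show "G (F c) p = c p"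
        using c unfolding G_def F_def L_def by (cases p) (auto simp: PiE_def extensional_def)
    qed
    show "F (G Fm) = Fm" if Fm: "Fm \<in> R" for Fm
    proof (rule ext)
      fix i show "F (G Fm) i = Fm i"
      proof (cases "i \<in> I")
        case True
        then have "Fm i \<in> PiE (J i) (\<lambda>_. B)" using Fm unfolding R_def by auto
        then show ?thesis using True unfolding F_def G_def by (auto simp: PiE_def extensional_def)
      next
        case False
        then show ?thesis using Fm unfolding F_def R_def by (auto simp: PiE_def extensional_def)
      qed
    qed
  qed
  then have "card L = card R" by (rule bij_betw_same_card)
  also have "card R = (\<Prod>i\<in>I. card {f \<in> PiE (J i) (\<lambda>_. B). P i f})"
    unfolding R_def using fin by (rule card_PiE)
  finally show ?thesis unfolding L_def .
qed

lemma inj_on_lin: "inj_on f (A :: nat set) \<longleftrightarrow> (\<forall>r\<in>A. \<forall>s\<in>A. r < s \<longrightarrow> f r \<noteq> f s)"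
proof
  assume "inj_on f A" then show "\<forall>r\<in>A. \<forall>s\<in>A. r < s \<longrightarrow> f r \<noteq> f s"
    by (auto simp: inj_on_def)
next
  assume H: "\<forall>r\<in>A. \<forall>s\<in>A. r < s \<longrightarrow> f r \<noteq> f s"
  show "inj_on f A"
  proof (rule inj_onI)
    fix r s assume "r \<in> A" "s \<in> A" "f r = f s"
    then show "r = s" using H by (metis linorder_neqE_nat)
  qed
qed

lemma clique_good:
  "(\<forall>e\<in>{{(i, r), (i, s)} | i r s. i \<in> supp_m n m \<and> 1 \<le> r \<and> r < s \<and> s \<le> length (\<Lambda> i)}.
      \<not> (\<exists>a. \<forall>x\<in>e. c x = a)) \<longleftrightarrow>
   (\<forall>i\<in>supp_m n m. inj_on (\<lambda>r. c (i, r)) {1..length (\<Lambda> i)})"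
  (is "?L \<longleftrightarrow> ?R")
proof -
  have "?L \<longleftrightarrow> (\<forall>i r s. i \<in> supp_m n m \<and> 1 \<le> r \<and> r < s \<and> s \<le> length (\<Lambda> i) \<longrightarrow> c (i, r) \<noteq> c (i, s))"
    (is "_ \<longleftrightarrow> ?M")
  proof
    assume L: ?L
    show ?M
    proof (intro allI impI notI)
      fix i r s assume P: "i \<in> supp_m n m \<and> 1 \<le> r \<and> r < s \<and> s \<le> length (\<Lambda> i)" and eq: "c (i, r) = c (i, s)"
      have mem: "{(i, r), (i, s)} \<in> {{(i, r), (i, s)} | i r s. i \<in> supp_m n m \<and> 1 \<le> r \<and> r < s \<and> s \<le> length (\<Lambda> i)}"
        using P by blast
      have "\<forall>x\<in>{(i, r), (i, s)}. c x = c (i, r)" using eq by simp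
      then show False using L mem by blast
    qed
  next
    assume M: ?M
    show ?L
    proof (intro ballI notI)
      fix e assume "e \<in> {{(i, r), (i, s)} | i r s. i \<in> supp_m n m \<and> 1 \<le> r \<and> r < s \<and> s \<le> length (\<Lambda> i)}"
      then obtain i r s where e: "e = {(i, r), (i, s)}" and P: "i \<in> supp_m n m \<and> 1 \<le> r \<and> r < s \<and> s \<le> length (\<Lambda> i)"
        by blast
      assume "\<exists>a. \<forall>x\<in>e. c x = a"
      then obtain a where "\<forall>x\<in>e. c x = a" by blast
      then have "c (i, r) = c (i, s)" using e by simp
      then show False using M P by blast
    qed
  qed
  also have "?M \<longleftrightarrow> ?R"
  proof
    assume M: ?M
    show ?R unfolding inj_on_lin using M by auto
  next
    assume R: ?R
    show ?M
    proof (intro allI impI)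
      fix i r s assume P: "i \<in> supp_m n m \<and> 1 \<le> r \<and> r < s \<and> s \<le> length (\<Lambda> i)"
      then have "inj_on (\<lambda>r. c (i, r)) {1..length (\<Lambda> i)}" using R by blast
      then show "c (i, r) \<noteq> c (i, s)" using P unfolding inj_on_lin by auto
    qed
  qed
  finally show ?thesis .
qed

lemma trans_good:
  "(\<forall>e'\<in>{(\<lambda>i. (i, \<rho> i)) ` e | e \<rho>. e \<in> E \<and> e \<subseteq> supp_m n m \<and>
        (\<forall>i\<in>e. 1 \<le> \<rho> i \<and> \<rho> i \<le> length (\<Lambda> i))}. \<not> (\<exists>a. \<forall>x\<in>e'. c x = a)) \<longleftrightarrow>
   (\<forall>e\<in>E. e \<subseteq> supp_m n m \<longrightarrow> (\<Inter>i\<in>e. (\<lambda>r. c (i, r)) ` {1..length (\<Lambda> i)}) = {})"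
  (is "?L \<longleftrightarrow> ?R")
proof
  assume L: ?L
  show ?R
  proof (intro ballI impI)
    fix e assume e: "e \<in> E" "e \<subseteq> supp_m n m"
    show "(\<Inter>i\<in>e. (\<lambda>r. c (i, r)) ` {1..length (\<Lambda> i)}) = {}"
    proof (rule ccontr)
      assume "(\<Inter>i\<in>e. (\<lambda>r. c (i, r)) ` {1..length (\<Lambda> i)}) \<noteq> {}"
      then obtain a where a: "a \<in> (\<Inter>i\<in>e. (\<lambda>r. c (i, r)) ` {1..length (\<Lambda> i)})" by blast
      have "\<forall>i\<in>e. \<exists>r. (1 \<le> r \<and> r \<le> length (\<Lambda> i)) \<and> c (i, r) = a"
      proof
        fix i assume "i \<in> e"
        then have "a \<in> (\<lambda>r. c (i, r)) ` {1..length (\<Lambda> i)}" using a by blast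
        then obtain r where "r \<in> {1..length (\<Lambda> i)}" "a = c (i, r)" by (rule imageE)
        then show "\<exists>r. (1 \<le> r \<and> r \<le> length (\<Lambda> i)) \<and> c (i, r) = a" by auto
      qed
      then have "\<exists>\<rho>. \<forall>i\<in>e. (1 \<le> \<rho> i \<and> \<rho> i \<le> length (\<Lambda> i)) \<and> c (i, \<rho> i) = a"
        by (rule bchoice)
      then obtain \<rho> where \<rho>: "\<forall>i\<in>e. (1 \<le> \<rho> i \<and> \<rho> i \<le> length (\<Lambda> i)) \<and> c (i, \<rho> i) = a"
        by blast
      have "\<exists>e0 \<rho>0. (\<lambda>i. (i, \<rho> i)) ` e = (\<lambda>i. (i, \<rho>0 i)) ` e0 \<and> e0 \<in> E \<and> e0 \<subseteq> supp_m n m \<and>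
        (\<forall>i\<in>e0. 1 \<le> \<rho>0 i \<and> \<rho>0 i \<le> length (\<Lambda> i))"
        using e \<rho> by (intro exI[of _ e] exI[of _ \<rho>]) simp
      then have mem: "(\<lambda>i. (i, \<rho> i)) ` e \<in> {(\<lambda>i. (i, \<rho> i)) ` e | e \<rho>. e \<in> E \<and> e \<subseteq> supp_m n m \<and>
        (\<forall>i\<in>e. 1 \<le> \<rho> i \<and> \<rho> i \<le> length (\<Lambda> i))}" by (simp only: mem_Collect_eq)
      have "\<not> (\<exists>a. \<forall>x\<in>(\<lambda>i. (i, \<rho> i)) ` e. c x = a)" using bspec[OF L mem] .
      moreover have "\<forall>x\<in>(\<lambda>i. (i, \<rho> i)) ` e. c x = a" using \<rho> by auto
      ultimately show False by blast
    qed
  qed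
next
  assume R: ?R
  show ?L
  proof (intro ballI notI)
    fix e' assume "e' \<in> {(\<lambda>i. (i, \<rho> i)) ` e | e \<rho>. e \<in> E \<and> e \<subseteq> supp_m n m \<and>
        (\<forall>i\<in>e. 1 \<le> \<rho> i \<and> \<rho> i \<le> length (\<Lambda> i))}"
    then have "\<exists>e \<rho>. e' = (\<lambda>i. (i, \<rho> i)) ` e \<and> e \<in> E \<and> e \<subseteq> supp_m n m \<and>
        (\<forall>i\<in>e. 1 \<le> \<rho> i \<and> \<rho> i \<le> length (\<Lambda> i))" by (simp only: mem_Collect_eq)
    then obtain e \<rho> where e': "e' = (\<lambda>i. (i, \<rho> i)) ` e" and e: "e \<in> E" "e \<subseteq> supp_m n m"
      and \<rho>: "\<forall>i\<in>e. 1 \<le> \<rho> i \<and> \<rho> i \<le> length (\<Lambda> i)" by (elim exE conjE)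
    assume "\<exists>a. \<forall>x\<in>e'. c x = a"
    then obtain a where a: "\<forall>x\<in>e'. c x = a" by (elim exE)
    have ain: "a \<in> (\<Inter>i\<in>e. (\<lambda>r. c (i, r)) ` {1..length (\<Lambda> i)})"
    proof
      fix i assume i: "i \<in> e"
      have "(i, \<rho> i) \<in> e'" using i e' by (simp add: image_iff)
      then have ca: "c (i, \<rho> i) = a" using a by (rule_tac bspec) 
      have "\<rho> i \<in> {1..length (\<Lambda> i)}" using \<rho> i by simp
      then show "a \<in> (\<lambda>r. c (i, r)) ` {1..length (\<Lambda> i)}" using ca by (rule_tac image_eqI) simp_all
    qed
    have "(\<Inter>i\<in>e. (\<lambda>r. c (i, r)) ` {1..length (\<Lambda> i)}) = {}" using R e by simp
    then show False using ain by simp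
  qed
qed

lemma good_iff:
  "(\<forall>e\<in>G_edges n E m \<Lambda>. \<not> (\<exists>a. \<forall>x\<in>e. c x = a)) \<longleftrightarrow>
   (\<forall>i\<in>supp_m n m. inj_on (\<lambda>r. c (i, r)) {1..length (\<Lambda> i)}) \<and>
   (\<forall>e\<in>E. e \<subseteq> supp_m n m \<longrightarrow> (\<Inter>i\<in>e. (\<lambda>r. c (i, r)) ` {1..length (\<Lambda> i)}) = {})"
  unfolding G_edges_def ball_Un clique_good trans_good ..

lemma G_verts_Sigma: "G_verts n m \<Lambda> = Sigma (supp_m n m) (\<lambda>i. {1..length (\<Lambda> i)})"
  unfolding G_verts_def by auto



definition marked_set :: "nat \<Rightarrow> nat set set \<Rightarrow> nat set \<Rightarrow> (nat \<Rightarrow> nat) \<Rightarrow> nat \<Rightarrow> (nat \<Rightarrow> nat multiset) set" where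
  "marked_set n E Vsp m q = {\<Gamma> :: nat \<Rightarrow> nat multiset.
      (\<forall>v. v \<notin> {1..n} \<longrightarrow> \<Gamma> v = {#}) \<and>
      (\<forall>v\<in>{1..n}. set_mset (\<Gamma> v) \<subseteq> {1..q} \<and> size (\<Gamma> v) = m v \<and>
                   (v \<notin> Vsp \<longrightarrow> (\<forall>x. count (\<Gamma> v) x \<le> 1))) \<and>
      (\<forall>e\<in>E. (\<Inter>v\<in>e. set_mset (\<Gamma> v)) = {})}"

lemma marked_count_eq: "marked_count n E Vsp m q = card (marked_set n E Vsp m q)"
  unfolding marked_count_def marked_set_def ..

definition goodset :: "nat \<Rightarrow> nat set set \<Rightarrow> (nat \<Rightarrow> nat) \<Rightarrow> (nat \<Rightarrow> nat list) \<Rightarrow> nat \<Rightarrow> (nat \<times> nat \<Rightarrow> nat) set" where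
  "goodset n E m \<Lambda> q = {c \<in> PiE (G_verts n m \<Lambda>) (\<lambda>_. {1..q}). \<forall>e\<in>G_edges n E m \<Lambda>. \<not> (\<exists>a. \<forall>x\<in>e. c x = a)}"

lemma hyp_chrom_eq: "hyp_chrom (G_verts n m \<Lambda>) (G_edges n E m \<Lambda>) q = card (goodset n E m \<Lambda> q)"
  unfolding hyp_chrom_def goodset_def ..

definition Bset where
  "Bset n E Vsp m q \<Lambda> = {\<Gamma> \<in> marked_set n E Vsp m q. \<forall>i\<in>supp_m n m. shape (\<Gamma> i) = mset (\<Lambda> i)}"

definition Phi :: "nat \<Rightarrow> (nat \<Rightarrow> nat) \<Rightarrow> (nat \<Rightarrow> nat list) \<Rightarrow> (nat \<times> nat \<Rightarrow> nat) \<Rightarrow> nat \<Rightarrow> nat multiset" where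
  "Phi n m \<Lambda> c = (\<lambda>i. if i \<in> supp_m n m then msum (\<Lambda> i) (\<lambda>r. c (i, r)) else {#})"

lemma supp_sub: "supp_m n m \<subseteq> {1..n}"
  unfolding supp_m_def by auto

lemma not_supp: "i \<in> {1..n} \<Longrightarrow> i \<notin> supp_m n m \<Longrightarrow> m i = 0"
  unfolding supp_m_def by auto

lemma finite_supp: "finite (supp_m n m)"
  using supp_sub finite_subset by blast

lemma S_facts:
  assumes "\<Lambda> \<in> S_m n Vsp m"
  shows "\<And>i. i \<notin> {1..n} \<Longrightarrow> \<Lambda> i = []"
    and "\<And>i. i \<in> {1..n} \<Longrightarrow> \<forall>x\<in>set (\<Lambda> i). 0 < x"
    and "\<And>i. i \<in> {1..n} \<Longrightarrow> sum_list (\<Lambda> i) = m i"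
    and "\<And>i. i \<in> {1..n} \<Longrightarrow> i \<notin> Vsp \<Longrightarrow> \<Lambda> i = replicate (m i) 1"
    and "\<And>i. i \<in> {1..n} \<Longrightarrow> sorted (rev (\<Lambda> i))"
  using assms unfolding S_m_def is_partition_def by auto

lemma Phi_in_B:
  assumes S: "\<Lambda> \<in> S_m n Vsp m" and c: "c \<in> goodset n E m \<Lambda> q"
  shows "Phi n m \<Lambda> c \<in> Bset n E Vsp m q \<Lambda>"
proof -
  let ?s = "supp_m n m"
  have cP: "c \<in> PiE (Sigma ?s (\<lambda>i. {1..length (\<Lambda> i)})) (\<lambda>_. {1..q})"
    using c unfolding goodset_def G_verts_Sigma by blast
  have good: "\<forall>e\<in>G_edges n E m \<Lambda>. \<not> (\<exists>a. \<forall>x\<in>e. c x = a)" using c unfolding goodset_def by blast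
  have inj: "\<forall>i\<in>?s. inj_on (\<lambda>r. c (i, r)) {1..length (\<Lambda> i)}"
    and int: "\<forall>e\<in>E. e \<subseteq> ?s \<longrightarrow> (\<Inter>i\<in>e. (\<lambda>r. c (i, r)) ` {1..length (\<Lambda> i)}) = {}"
    using good unfolding good_iff by blast+
  define \<Gamma> where "\<Gamma> = Phi n m \<Lambda> c"
  have pos: "\<forall>x\<in>set (\<Lambda> i). 0 < x" if "i \<in> ?s" for i
    using S_facts(2)[OF S] supp_sub that by blast
  have Gin: "\<Gamma> i = msum (\<Lambda> i) (\<lambda>r. c (i, r))" if "i \<in> ?s" for i
    using that unfolding \<Gamma>_def Phi_def by simp
  have Gout: "\<Gamma> i = {#}" if "i \<notin> ?s" for i
    using that unfolding \<Gamma>_def Phi_def by simp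
  have setG: "set_mset (\<Gamma> i) = (\<lambda>r. c (i, r)) ` {1..length (\<Lambda> i)}" if "i \<in> ?s" for i
    using Gin[OF that] set_msum[OF pos[OF that]] by simp
  have m1: "\<forall>v. v \<notin> {1..n} \<longrightarrow> \<Gamma> v = {#}"
    using Gout supp_sub by blast
  have m2: "set_mset (\<Gamma> v) \<subseteq> {1..q} \<and> size (\<Gamma> v) = m v \<and> (v \<notin> Vsp \<longrightarrow> (\<forall>x. count (\<Gamma> v) x \<le> 1))"
    if v: "v \<in> {1..n}" for v
  proof (cases "v \<in> ?s")
    case True
    have "set_mset (\<Gamma> v) \<subseteq> {1..q}"
    proof
      fix x assume "x \<in># \<Gamma> v"
      then obtain r where r: "r \<in> {1..length (\<Lambda> v)}" "x = c (v, r)" using setG[OF True] by auto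
      have "(v, r) \<in> Sigma ?s (\<lambda>i. {1..length (\<Lambda> i)})" using True r by blast
      then show "x \<in> {1..q}" using cP r(2) by (auto simp: PiE_def Pi_def)
    qed
    moreover have "size (\<Gamma> v) = m v" using Gin[OF True] size_msum S_facts(3)[OF S v] by simp
    moreover have "\<forall>x. count (\<Gamma> v) x \<le> 1" if nv: "v \<notin> Vsp"
    proof
      fix x
      have rep: "\<Lambda> v = replicate (m v) 1" using S_facts(4)[OF S v nv] .
      show "count (\<Gamma> v) x \<le> 1"
      proof (cases "x \<in> (\<lambda>r. c (v, r)) ` {1..length (\<Lambda> v)}")
        case True
        then obtain r where r: "r \<in> {1..length (\<Lambda> v)}" "x = c (v, r)" by auto
        have "count (\<Gamma> v) x = \<Lambda> v ! (r - 1)"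
          using Gin[OF \<open>v \<in> ?s\<close>] count_msum_inj[OF inj[rule_format, OF \<open>v \<in> ?s\<close>] r(1)] r(2) by simp
        also have "\<dots> = 1"
        proof -
          have "r - 1 < m v" using r(1) rep by auto
          then show ?thesis using rep by simp
        qed
        finally show ?thesis by simp
      next
        case False
        then show ?thesis using Gin[OF \<open>v \<in> ?s\<close>] count_msum_out[OF False] by simp
      qed
    qed
    ultimately show ?thesis by blast
  next
    case False
    then show ?thesis using Gout[OF False] not_supp[OF v False] by simp
  qed
  have m3: "(\<Inter>v\<in>e. set_mset (\<Gamma> v)) = {}" if e: "e \<in> E" for e
  proof (cases "e \<subseteq> ?s")
    case True
    have "(\<Inter>v\<in>e. set_mset (\<Gamma> v)) = (\<Inter>i\<in>e. (\<lambda>r. c (i, r)) ` {1..length (\<Lambda> i)})"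
      using True setG by (intro INF_cong) auto
    then show ?thesis using int e True by simp
  next
    case False
    then obtain v where v: "v \<in> e" "v \<notin> ?s" by blast
    have "(\<Inter>v\<in>e. set_mset (\<Gamma> v)) \<subseteq> set_mset (\<Gamma> v)" using v(1) by blast
    then show ?thesis using Gout[OF v(2)] by simp
  qed
  have "\<Gamma> \<in> marked_set n E Vsp m q"
    unfolding marked_set_def mem_Collect_eq using m1 m2 m3 by blast
  moreover have "\<forall>i\<in>?s. shape (\<Gamma> i) = mset (\<Lambda> i)"
    using Gin shape_msum pos inj by simp
  ultimately show ?thesis unfolding Bset_def \<Gamma>_def by blast
qed



lemma fibre_eq:
  assumes S: "\<Lambda> \<in> S_m n Vsp m" and G: "\<Gamma> \<in> Bset n E Vsp m q \<Lambda>"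
  shows "{c \<in> goodset n E m \<Lambda> q. Phi n m \<Lambda> c = \<Gamma>} =
    {c \<in> PiE (Sigma (supp_m n m) (\<lambda>i. {1..length (\<Lambda> i)})) (\<lambda>_. {1..q}).
       \<forall>i\<in>supp_m n m. (\<lambda>f. inj_on f {1..length (\<Lambda> i)} \<and> msum (\<Lambda> i) f = \<Gamma> i) (\<lambda>r. c (i, r))}"
  (is "?A = ?B")
proof (intro equalityI subsetI)
  let ?s = "supp_m n m"
  fix c assume "c \<in> ?A"
  then have c: "c \<in> goodset n E m \<Lambda> q" and ph: "Phi n m \<Lambda> c = \<Gamma>" unfolding mem_Collect_eq by simp_all
  have cP: "c \<in> PiE (Sigma ?s (\<lambda>i. {1..length (\<Lambda> i)})) (\<lambda>_. {1..q})"
    using c unfolding goodset_def G_verts_Sigma by blast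
  have good: "\<forall>e\<in>G_edges n E m \<Lambda>. \<not> (\<exists>a. \<forall>x\<in>e. c x = a)" using c unfolding goodset_def by blast
  have inj: "\<forall>i\<in>?s. inj_on (\<lambda>r. c (i, r)) {1..length (\<Lambda> i)}"
    using good unfolding good_iff by blast
  have ms: "msum (\<Lambda> i) (\<lambda>r. c (i, r)) = \<Gamma> i" if "i \<in> ?s" for i
  proof -
    have "Phi n m \<Lambda> c i = \<Gamma> i" using ph by simp
    then show ?thesis using that unfolding Phi_def by simp
  qed
  have H: "\<forall>i\<in>?s. (\<lambda>f. inj_on f {1..length (\<Lambda> i)} \<and> msum (\<Lambda> i) f = \<Gamma> i) (\<lambda>r. c (i, r))"
    using ms inj by simp
  show "c \<in> ?B" unfolding mem_Collect_eq using cP H by (rule conjI)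
next
  let ?s = "supp_m n m"
  fix c assume "c \<in> ?B"
  then have cP: "c \<in> PiE (Sigma ?s (\<lambda>i. {1..length (\<Lambda> i)})) (\<lambda>_. {1..q})"
    and H: "\<forall>i\<in>?s. inj_on (\<lambda>r. c (i, r)) {1..length (\<Lambda> i)} \<and> msum (\<Lambda> i) (\<lambda>r. c (i, r)) = \<Gamma> i"
    unfolding mem_Collect_eq by simp_all
  have inj: "\<forall>i\<in>?s. inj_on (\<lambda>r. c (i, r)) {1..length (\<Lambda> i)}"
    and ms: "\<forall>i\<in>?s. msum (\<Lambda> i) (\<lambda>r. c (i, r)) = \<Gamma> i" using H by simp_all
  have Gm: "\<Gamma> \<in> marked_set n E Vsp m q" using G unfolding Bset_def by blast
  have G1: "\<forall>v. v \<notin> {1..n} \<longrightarrow> \<Gamma> v = {#}"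
    and G2: "\<forall>v\<in>{1..n}. set_mset (\<Gamma> v) \<subseteq> {1..q} \<and> size (\<Gamma> v) = m v \<and> (v \<notin> Vsp \<longrightarrow> (\<forall>x. count (\<Gamma> v) x \<le> 1))"
    and G3: "\<forall>e\<in>E. (\<Inter>v\<in>e. set_mset (\<Gamma> v)) = {}"
    using Gm unfolding marked_set_def mem_Collect_eq by blast+
  have pos: "\<forall>x\<in>set (\<Lambda> i). 0 < x" if "i \<in> ?s" for i
    using S_facts(2)[OF S] supp_sub that by blast
  have int: "\<forall>e\<in>E. e \<subseteq> ?s \<longrightarrow> (\<Inter>i\<in>e. (\<lambda>r. c (i, r)) ` {1..length (\<Lambda> i)}) = {}"
  proof (intro ballI impI)
    fix e assume e: "e \<in> E" "e \<subseteq> ?s"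
    have "(\<Inter>i\<in>e. (\<lambda>r. c (i, r)) ` {1..length (\<Lambda> i)}) = (\<Inter>v\<in>e. set_mset (\<Gamma> v))"
    proof (intro INF_cong refl)
      fix i assume "i \<in> e"
      then have i: "i \<in> ?s" using e by blast
      have "\<Gamma> i = msum (\<Lambda> i) (\<lambda>r. c (i, r))" using ms i by simp
      then show "(\<lambda>r. c (i, r)) ` {1..length (\<Lambda> i)} = set_mset (\<Gamma> i)"
        using set_msum[OF pos[OF i], of "\<lambda>r. c (i, r)"] by simp
    qed
    then show "(\<Inter>i\<in>e. (\<lambda>r. c (i, r)) ` {1..length (\<Lambda> i)}) = {}" using G3 e by simp
  qed
  have good: "\<forall>e\<in>G_edges n E m \<Lambda>. \<not> (\<exists>a. \<forall>x\<in>e. c x = a)"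
    unfolding good_iff using inj int by blast
  have "c \<in> goodset n E m \<Lambda> q" unfolding goodset_def G_verts_Sigma using cP good by blast
  moreover have "Phi n m \<Lambda> c = \<Gamma>"
  proof (rule ext)
    fix i show "Phi n m \<Lambda> c i = \<Gamma> i"
    proof (cases "i \<in> ?s")
      case True then show ?thesis using ms unfolding Phi_def by simp
    next
      case False
      show ?thesis
      proof (cases "i \<in> {1..n}")
        case True
        then have "size (\<Gamma> i) = 0" using G2 not_supp[OF True False] by simp
        then show ?thesis using False unfolding Phi_def by simp
      next
        case F2: False
        then show ?thesis using False G1 unfolding Phi_def by simp
      qed
    qed
  qed
  ultimately show "c \<in> ?A" unfolding mem_Collect_eq by (rule conjI)
qed

lemma card_fibre:
  assumes S: "\<Lambda> \<in> S_m n Vsp m" and G: "\<Gamma> \<in> Bset n E Vsp m q \<Lambda>"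
  shows "card {c \<in> goodset n E m \<Lambda> q. Phi n m \<Lambda> c = \<Gamma>} = (\<Prod>i\<in>supp_m n m. mult_fact (\<Lambda> i))"
proof -
  let ?s = "supp_m n m"
  have Gm: "\<Gamma> \<in> marked_set n E Vsp m q" and sh: "\<forall>i\<in>?s. shape (\<Gamma> i) = mset (\<Lambda> i)"
    using G unfolding Bset_def by blast+
  have G2: "\<forall>v\<in>{1..n}. set_mset (\<Gamma> v) \<subseteq> {1..q}"
    using Gm unfolding marked_set_def mem_Collect_eq by blast
  define P where "P = (\<lambda>i (f :: nat \<Rightarrow> nat). inj_on f {1..length (\<Lambda> i)} \<and> msum (\<Lambda> i) f = \<Gamma> i)"
  define J where "J = (\<lambda>i. {1..length (\<Lambda> i)})"
  have cong: "\<And>i f g. i \<in> ?s \<Longrightarrow> (\<And>r. r \<in> J i \<Longrightarrow> f r = g r) \<Longrightarrow> P i f = P i g"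
  proof -
    fix i and f g :: "nat \<Rightarrow> nat" assume "\<And>r. r \<in> J i \<Longrightarrow> f r = g r"
    then show "P i f = P i g"
      unfolding P_def J_def using inj_on_cong[of "{1..length (\<Lambda> i)}" f g] msum_cong[of "\<Lambda> i" f g] by simp
  qed
  have 1: "card {c \<in> PiE (Sigma ?s J) (\<lambda>_. {1..q}). \<forall>i\<in>?s. P i (\<lambda>r. c (i, r))} =
      (\<Prod>i\<in>?s. card {f \<in> PiE (J i) (\<lambda>_. {1..q}). P i f})"
    using card_Sigma_PiE[where I="?s" and J=J and B="{1..q}" and P=P, OF finite_supp cong] .
  have 2: "{c \<in> goodset n E m \<Lambda> q. Phi n m \<Lambda> c = \<Gamma>} = {c \<in> PiE (Sigma ?s J) (\<lambda>_. {1..q}). \<forall>i\<in>?s. P i (\<lambda>r. c (i, r))}"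
    unfolding P_def J_def by (rule fibre_eq[OF S G])
  have 3: "card {f \<in> PiE (J i) (\<lambda>_. {1..q}). P i f} = mult_fact (\<Lambda> i)" if i: "i \<in> ?s" for i
  proof -
    have "card (Tset (\<Lambda> i) (\<Gamma> i) {1..q}) = mult_fact (\<Lambda> i)"
    proof (rule card_Tset)
      show "finite {1..q}" by simp
      show "\<forall>x\<in>set (\<Lambda> i). 0 < x" using S_facts(2)[OF S] supp_sub i by blast
      show "set_mset (\<Gamma> i) \<subseteq> {1..q}" using G2 supp_sub i by blast
      show "shape (\<Gamma> i) = mset (\<Lambda> i)" using sh i by blast
    qed
    moreover have "{f \<in> PiE (J i) (\<lambda>_. {1..q}). P i f} = Tset (\<Lambda> i) (\<Gamma> i) {1..q}"
      unfolding Tset_def P_def J_def ..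
    ultimately show ?thesis by simp
  qed
  show ?thesis unfolding 2 1 using 3 by (rule prod.cong[OF refl])
qed

lemma mult_fact_pos: "mult_fact xs > 0"
  unfolding mult_fact_def by (simp add: prod_pos)

lemma finite_goodset: "finite (goodset n E m \<Lambda> q)"
proof -
  have fin: "finite (G_verts n m \<Lambda>)" unfolding G_verts_Sigma using finite_supp by blast
  have sub: "goodset n E m \<Lambda> q \<subseteq> PiE (G_verts n m \<Lambda>) (\<lambda>_. {1..q})" unfolding goodset_def by blast
  show ?thesis by (rule finite_subset[OF sub finite_PiE[OF fin]]) simp
qed

lemma card_good:
  assumes S: "\<Lambda> \<in> S_m n Vsp m"
  shows "card (goodset n E m \<Lambda> q) = card (Bset n E Vsp m q \<Lambda>) * (\<Prod>i\<in>supp_m n m. mult_fact (\<Lambda> i))"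
    and "finite (Bset n E Vsp m q \<Lambda>)"
proof -
  let ?A = "goodset n E m \<Lambda> q" and ?B = "Bset n E Vsp m q \<Lambda>" and ?P = "Phi n m \<Lambda>"
  define F where "F = (\<lambda>\<Gamma>. {c \<in> ?A. ?P c = \<Gamma>})"
  have BP: "?B \<subseteq> ?P ` ?A"
  proof
    fix \<Gamma> assume G: "\<Gamma> \<in> ?B"
    have "card (F \<Gamma>) > 0" unfolding F_def card_fibre[OF S G] using mult_fact_pos by (simp add: prod_pos)
    then have "F \<Gamma> \<noteq> {}" by (metis card.empty less_irrefl)
    then obtain c where "c \<in> F \<Gamma>" by blast
    then have c: "c \<in> ?A" and pc: "?P c = \<Gamma>" unfolding F_def mem_Collect_eq by simp_all
    show "\<Gamma> \<in> ?P ` ?A" using c pc[symmetric] by (rule_tac image_eqI)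
  qed
  show finB: "finite ?B" using finite_subset[OF BP] finite_goodset by blast
  have Aeq: "?A = (\<Union>\<Gamma>\<in>?B. F \<Gamma>)"
  proof (intro equalityI subsetI)
    fix c assume c: "c \<in> ?A"
    then have "?P c \<in> ?B" using Phi_in_B[OF S] by blast
    moreover have "c \<in> F (?P c)" unfolding F_def using c by simp
    ultimately show "c \<in> (\<Union>\<Gamma>\<in>?B. F \<Gamma>)" by blast
  next
    fix c assume "c \<in> (\<Union>\<Gamma>\<in>?B. F \<Gamma>)"
    then obtain \<Gamma> where "c \<in> F \<Gamma>" by (rule UN_E)
    then show "c \<in> ?A" unfolding F_def by simp
  qed
  have "card ?A = (\<Sum>\<Gamma>\<in>?B. card (F \<Gamma>))"
    unfolding Aeq
  proof (rule card_UN_disjoint[OF finB])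
    show "\<forall>\<Gamma>\<in>?B. finite (F \<Gamma>)" unfolding F_def using finite_goodset by simp
    show "\<forall>\<Gamma>\<in>?B. \<forall>\<Gamma>'\<in>?B. \<Gamma> \<noteq> \<Gamma>' \<longrightarrow> F \<Gamma> \<inter> F \<Gamma>' = {}"
    proof (intro ballI impI)
      fix \<Gamma> \<Gamma>' :: "nat \<Rightarrow> nat multiset" assume ne: "\<Gamma> \<noteq> \<Gamma>'"
      show "F \<Gamma> \<inter> F \<Gamma>' = {}"
      proof (rule ccontr)
        assume "F \<Gamma> \<inter> F \<Gamma>' \<noteq> {}"
        then obtain c where "c \<in> F \<Gamma>" "c \<in> F \<Gamma>'" by blast
        then have "?P c = \<Gamma>" "?P c = \<Gamma>'" unfolding F_def by simp_all
        then show False using ne by simp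
      qed
    qed
  qed
  also have "\<dots> = (\<Sum>\<Gamma>\<in>?B. (\<Prod>i\<in>supp_m n m. mult_fact (\<Lambda> i)))"
  proof (rule sum.cong[OF refl])
    fix \<Gamma> assume "\<Gamma> \<in> ?B"
    then show "card (F \<Gamma>) = (\<Prod>i\<in>supp_m n m. mult_fact (\<Lambda> i))" unfolding F_def by (rule card_fibre[OF S])
  qed
  also have "\<dots> = card ?B * (\<Prod>i\<in>supp_m n m. mult_fact (\<Lambda> i))" by simp
  finally show "card ?A = card ?B * (\<Prod>i\<in>supp_m n m. mult_fact (\<Lambda> i))" .
qed



lemma in_shape: "x \<in># shape M \<Longrightarrow> \<exists>y. y \<in># M \<and> x = count M y"
  unfolding shape_def in_image_mset by auto

lemma shape_pos: "x \<in># shape M \<Longrightarrow> 0 < x"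
  using in_shape by fastforce

lemma sum_shape: "sum_mset (shape M) = size M"
  unfolding shape_def size_multiset_overloaded_eq by (rule sum_unfold_sum_mset[symmetric])

lemma pos_sum_zero: "\<forall>x\<in>set xs. 0 < (x::nat) \<Longrightarrow> sum_list xs = 0 \<Longrightarrow> xs = []"
  by (cases xs) auto

lemma length_le_sum: "\<forall>x\<in>set xs. 0 < (x::nat) \<Longrightarrow> length xs \<le> sum_list xs"
  by (induction xs) auto

definition LamOf :: "nat \<Rightarrow> (nat \<Rightarrow> nat) \<Rightarrow> (nat \<Rightarrow> nat multiset) \<Rightarrow> nat \<Rightarrow> nat list" where
  "LamOf n m \<Gamma> = (\<lambda>i. if i \<in> supp_m n m then rev (sorted_list_of_multiset (shape (\<Gamma> i))) else [])"

lemma marked_facts: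
  assumes "\<Gamma> \<in> marked_set n E Vsp m q"
  shows "\<And>v. v \<notin> {1..n} \<Longrightarrow> \<Gamma> v = {#}"
    and "\<And>v. v \<in> {1..n} \<Longrightarrow> size (\<Gamma> v) = m v"
    and "\<And>v. v \<in> {1..n} \<Longrightarrow> v \<notin> Vsp \<Longrightarrow> count (\<Gamma> v) x \<le> 1"
  using assms unfolding marked_set_def mem_Collect_eq by blast+

lemma LamOf_S:
  assumes G: "\<Gamma> \<in> marked_set n E Vsp m q"
  shows "LamOf n m \<Gamma> \<in> S_m n Vsp m"
proof -
  let ?L = "LamOf n m \<Gamma>"
  have a: "\<forall>i. i \<notin> {1..n} \<longrightarrow> ?L i = []"
    using supp_sub[of n m] unfolding LamOf_def by auto
  have b: "is_partition (?L i) (m i) \<and> (i \<notin> Vsp \<longrightarrow> ?L i = replicate (m i) 1)" if i: "i \<in> {1..n}" for i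
  proof (cases "i \<in> supp_m n m")
    case True
    define L where "L = rev (sorted_list_of_multiset (shape (\<Gamma> i)))"
    have LL: "?L i = L" unfolding LamOf_def L_def using True by simp
    have sorted: "sorted (rev L)" unfolding L_def by simp
    have setL: "set L = set_mset (shape (\<Gamma> i))" unfolding L_def by simp
    have pos: "\<forall>x\<in>set L. 0 < x" unfolding setL using shape_pos by blast
    have "sum_list L = sum_mset (mset L)" by (simp add: sum_mset_sum_list)
    also have "mset L = shape (\<Gamma> i)" unfolding L_def by simp
    also have "sum_mset (shape (\<Gamma> i)) = m i" using sum_shape marked_facts(2)[OF G i] by simp
    finally have sumL: "sum_list L = m i" .
    have part: "is_partition L (m i)" unfolding is_partition_def using sorted pos sumL by blast
    have rep: "L = replicate (m i) 1" if nv: "i \<notin> Vsp"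
    proof -
      have ones: "\<forall>x\<in>set L. x = 1"
      proof
        fix x assume "x \<in> set L"
        then have "x \<in># shape (\<Gamma> i)" using setL by simp
        then obtain y where y: "y \<in># \<Gamma> i" "x = count (\<Gamma> i) y" using in_shape by blast
        have le1: "count (\<Gamma> i) y \<le> 1" using marked_facts(3)[OF G i nv] .
        have c0: "count (\<Gamma> i) y \<noteq> 0" using y(1) by (simp add: count_eq_zero_iff)
        show "x = 1" using y(2) le1 c0 by arith
      qed
      then have L1: "replicate (length L) 1 = L" by (rule replicate_length_same)
      then have "sum_list L = length L" by (metis sum_list_replicate mult.right_neutral of_nat_id)
      then have "length L = m i" using sumL by simp
      then show ?thesis using L1 by simp
    qed
    show ?thesis using LL part rep by simp
  next
    case False
    then have "?L i = []" unfolding LamOf_def by simp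
    moreover have "m i = 0" using not_supp[OF i False] .
    ultimately show ?thesis unfolding is_partition_def by simp
  qed
  show ?thesis unfolding S_m_def mem_Collect_eq using a b by blast
qed

lemma LamOf_B:
  assumes G: "\<Gamma> \<in> marked_set n E Vsp m q"
  shows "\<Gamma> \<in> Bset n E Vsp m q (LamOf n m \<Gamma>)"
  unfolding Bset_def mem_Collect_eq LamOf_def using G by simp

lemma LamOf_unique:
  assumes S: "\<Lambda> \<in> S_m n Vsp m" and G: "\<Gamma> \<in> Bset n E Vsp m q \<Lambda>"
  shows "\<Lambda> = LamOf n m \<Gamma>"
proof (rule ext)
  fix i
  have sh: "\<forall>i\<in>supp_m n m. shape (\<Gamma> i) = mset (\<Lambda> i)" using G unfolding Bset_def by blast
  show "\<Lambda> i = LamOf n m \<Gamma> i"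
  proof (cases "i \<in> {1..n}")
    case False
    then have "i \<notin> supp_m n m" using supp_sub by blast
    then show ?thesis using S_facts(1)[OF S False] unfolding LamOf_def by simp
  next
    case i: True
    show ?thesis
    proof (cases "i \<in> supp_m n m")
      case True
      have "sort (\<Lambda> i) = rev (\<Lambda> i)"
        by (rule properties_for_sort) (simp_all add: S_facts(5)[OF S i])
      then show ?thesis unfolding LamOf_def using True sh by simp
    next
      case False
      have "\<Lambda> i = []"
        using pos_sum_zero[OF S_facts(2)[OF S i]] S_facts(3)[OF S i] not_supp[OF i False] by simp
      then show ?thesis unfolding LamOf_def using False by simp
    qed
  qed
qed

lemma finite_S: "finite (S_m n Vsp m)"
proof -
  define T where "T = PiE {1..n} (\<lambda>i. {xs. set xs \<subseteq> {0..m i} \<and> length xs \<le> m i})"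
  define h where "h = (\<lambda>(g :: nat \<Rightarrow> nat list) i. if i \<in> {1..n} then g i else [])"
  have "S_m n Vsp m \<subseteq> h ` T"
  proof
    fix \<Lambda> assume S: "\<Lambda> \<in> S_m n Vsp m"
    have "restrict \<Lambda> {1..n} \<in> T"
      unfolding T_def
    proof (rule PiE_I)
      fix i assume i: "i \<in> {1..n}"
      have "set (\<Lambda> i) \<subseteq> {0..m i}"
        using member_le_sum_list[of _ "\<Lambda> i"] S_facts(3)[OF S i] by auto
      moreover have "length (\<Lambda> i) \<le> m i" using length_le_sum[OF S_facts(2)[OF S i]] S_facts(3)[OF S i] by simp
      ultimately show "restrict \<Lambda> {1..n} i \<in> {xs. set xs \<subseteq> {0..m i} \<and> length xs \<le> m i}" using i by simp
    qed auto
    moreover have "\<Lambda> = h (restrict \<Lambda> {1..n})"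
      unfolding h_def using S_facts(1)[OF S] by (intro ext) simp
    ultimately show "\<Lambda> \<in> h ` T" by blast
  qed
  moreover have "finite T" unfolding T_def by (intro finite_PiE finite_lists_length_le) simp_all
  ultimately show ?thesis using finite_subset by blast
qed



theorem proposition5p2:
  fixes n :: nat and E :: "nat set set" and Vsp :: "nat set" and m :: "nat \<Rightarrow> nat" and q :: nat
  assumes "\<forall>e\<in>E. e \<subseteq> {1..n} \<and> e \<noteq> {}"
    and "Vsp \<subseteq> {1..n}"
    and "1 \<le> q"
  shows "real (marked_count n E Vsp m q) =
    (\<Sum>\<Lambda>\<in>S_m n Vsp m. real (hyp_chrom (G_verts n m \<Lambda>) (G_edges n E m \<Lambda>) q) /
        (\<Prod>i\<in>supp_m n m. real (mult_fact (\<Lambda> i))))"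
proof -
  let ?S = "S_m n Vsp m" and ?B = "Bset n E Vsp m q"
  have part: "marked_set n E Vsp m q = (\<Union>\<Lambda>\<in>?S. ?B \<Lambda>)"
  proof (intro equalityI subsetI)
    fix \<Gamma> assume G: "\<Gamma> \<in> marked_set n E Vsp m q"
    have "LamOf n m \<Gamma> \<in> ?S" using LamOf_S[OF G] .
    moreover have "\<Gamma> \<in> ?B (LamOf n m \<Gamma>)" using LamOf_B[OF G] .
    ultimately show "\<Gamma> \<in> (\<Union>\<Lambda>\<in>?S. ?B \<Lambda>)" by blast
  next
    fix \<Gamma> assume "\<Gamma> \<in> (\<Union>\<Lambda>\<in>?S. ?B \<Lambda>)"
    then obtain \<Lambda> where "\<Gamma> \<in> ?B \<Lambda>" by blast
    then show "\<Gamma> \<in> marked_set n E Vsp m q" unfolding Bset_def by simp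
  qed
  have "card (marked_set n E Vsp m q) = (\<Sum>\<Lambda>\<in>?S. card (?B \<Lambda>))"
    unfolding part
  proof (rule card_UN_disjoint[OF finite_S])
    show "\<forall>\<Lambda>\<in>?S. finite (?B \<Lambda>)" using card_good(2) by blast
    show "\<forall>\<Lambda>\<in>?S. \<forall>\<Lambda>'\<in>?S. \<Lambda> \<noteq> \<Lambda>' \<longrightarrow> ?B \<Lambda> \<inter> ?B \<Lambda>' = {}"
    proof (intro ballI impI)
      fix \<Lambda> \<Lambda>' assume S1: "\<Lambda> \<in> ?S" and S2: "\<Lambda>' \<in> ?S" and ne: "\<Lambda> \<noteq> \<Lambda>'"
      show "?B \<Lambda> \<inter> ?B \<Lambda>' = {}"
      proof (rule ccontr)
        assume "?B \<Lambda> \<inter> ?B \<Lambda>' \<noteq> {}"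
        then obtain \<Gamma> where G1: "\<Gamma> \<in> ?B \<Lambda>" and G2: "\<Gamma> \<in> ?B \<Lambda>'" by blast
        have "\<Lambda> = LamOf n m \<Gamma>" by (rule LamOf_unique[OF S1 G1])
        moreover have "\<Lambda>' = LamOf n m \<Gamma>" by (rule LamOf_unique[OF S2 G2])
        ultimately show False using ne by simp
      qed
    qed
  qed
  then have "real (marked_count n E Vsp m q) = (\<Sum>\<Lambda>\<in>?S. real (card (?B \<Lambda>)))"
    unfolding marked_count_eq by simp
  also have "\<dots> = (\<Sum>\<Lambda>\<in>?S. real (hyp_chrom (G_verts n m \<Lambda>) (G_edges n E m \<Lambda>) q) /
        (\<Prod>i\<in>supp_m n m. real (mult_fact (\<Lambda> i))))"
  proof (rule sum.cong[OF refl])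
    fix \<Lambda> assume S: "\<Lambda> \<in> ?S"
    have pos: "(\<Prod>i\<in>supp_m n m. real (mult_fact (\<Lambda> i))) > 0"
      using mult_fact_pos by (simp add: prod_pos)
    have "real (hyp_chrom (G_verts n m \<Lambda>) (G_edges n E m \<Lambda>) q) =
        real (card (?B \<Lambda>)) * (\<Prod>i\<in>supp_m n m. real (mult_fact (\<Lambda> i)))"
      unfolding hyp_chrom_eq card_good(1)[OF S] by simp
    then show "real (card (?B \<Lambda>)) = real (hyp_chrom (G_verts n m \<Lambda>) (G_edges n E m \<Lambda>) q) /
        (\<Prod>i\<in>supp_m n m. real (mult_fact (\<Lambda> i)))"
      using pos by simp
  qed
  finally show ?thesis .
qed


end
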